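(* Let $X$ be a nonempty compact metric space and $\Theta$ a complete tree system of peripheral extensions of $X$. Each point of $P_\Theta$ is isolated in the wedge $\vee\Theta$. In particular $P_\Theta$ is open in $\vee\Theta$, and $\vee\Theta\setminus P_\Theta$ is a compact metrizable space.
   Context: A peripheral extension of $X$ is a compact metric space $\ddot X$ containing a countably infinite discrete open dense subset $P$ with $\ddot X\setminus P\cong X$. Let $T$ be the countable tree with every vertex of infinite valence, $N_t$ the set of oriented edges starting at $t\in V_T$. A complete tree system $\Theta$ consists of, for each $t\in V_T$, a copy $X_t$ of $X$ with a peripheral extension $\ddot X_t$ and peripheral set $P_t$, and a bijection $b_t:N_t\to P_t$. For a finite subtree $F$, $\vee_F\Theta$ is the quotient of $\bigsqcup_{t\in V_F}\ddot X_t$ by $b_t([t,s])\sim b_s([s,t])$ for edges $[t,s]$ of $F$. For finite subtrees $F'\subset F$, $\rho_{F,F'}:\vee_F\Theta\to\vee_{F'}\Theta$ is the identity on $\vee_{F'}\Theta$ and maps $x\in\ddot X_s$, $s\in V_F\setminus V_{F'}$, to $b_t([t,t'])$, where $t$ is the vertex of $F'$ nearest to $s$ and $t'$ the neighbour of $t$ toward $s$. The wedge $\vee\Theta$ is the inverse limit of $(\vee_F\Theta,\rho_{F,F'})$ over finite subtrees. For each edge $e=[t,t']$ the points $b_t([t,t'])$ and $b_{t'}([t',t])$ define one point $p_{|e|}\in\vee\Theta$, and $P_\Theta=\{p_{|e|}\}$. *)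

theory Defs
  imports "HOL-Analysis.Analysis"
begin

definition quotient_topology :: "'a topology \<Rightarrow> ('a \<Rightarrow> 'b) \<Rightarrow> 'b topology" where
  "quotient_topology X f =
     topology (\<lambda>U. U \<subseteq> f ` topspace X \<and> openin X {x \<in> topspace X. f x \<in> U})"

definition peripheral_extension :: "'a topology \<Rightarrow> 'b topology \<Rightarrow> 'b set \<Rightarrow> bool" where
  "peripheral_extension X XX P \<longleftrightarrow>
     compact_space XX \<and> metrizable_space XX \<and>
     P \<subseteq> topspace XX \<and> countable P \<and> infinite P \<and>
     subtopology XX P = discrete_topology P \<and>
     openin XX P \<and> XX closure_of P = topspace XX \<and>
     subtopology XX (topspace XX - P) homeomorphic_space X"

definition walk :: "('v \<Rightarrow> 'v \<Rightarrow> bool) \<Rightarrow> 'v list \<Rightarrow> bool" where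
  "walk E xs \<longleftrightarrow> xs \<noteq> [] \<and> successively E xs"

definition is_tree :: "'v set \<Rightarrow> ('v \<Rightarrow> 'v \<Rightarrow> bool) \<Rightarrow> bool" where
  "is_tree V E \<longleftrightarrow>
     V \<noteq> {} \<and>
     (\<forall>x y. E x y \<longrightarrow> x \<in> V \<and> y \<in> V) \<and>
     (\<forall>x y. E x y \<longrightarrow> E y x) \<and> (\<forall>x. \<not> E x x) \<and>
     (\<forall>u\<in>V. \<forall>v\<in>V. \<exists>xs. walk E xs \<and> hd xs = u \<and> last xs = v) \<and>
     \<not> (\<exists>xs. walk E xs \<and> distinct xs \<and> length xs \<ge> 3 \<and> E (last xs) (hd xs))"

definition infinite_valence_tree :: "'v set \<Rightarrow> ('v \<Rightarrow> 'v \<Rightarrow> bool) \<Rightarrow> bool" where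
  "infinite_valence_tree V E \<longleftrightarrow>
     is_tree V E \<and> countable V \<and> (\<forall>v\<in>V. infinite {w. E v w})"

text \<open>Finite subtrees, identified with their (nonempty, finite, connected) vertex sets;
  a subtree of a tree contains every tree edge between its vertices.\<close>
definition fsubtree :: "'v set \<Rightarrow> ('v \<Rightarrow> 'v \<Rightarrow> bool) \<Rightarrow> 'v set \<Rightarrow> bool" where
  "fsubtree V E F \<longleftrightarrow> F \<subseteq> V \<and> finite F \<and> F \<noteq> {} \<and>
     (\<forall>u\<in>F. \<forall>v\<in>F. \<exists>xs. walk E xs \<and> hd xs = u \<and> last xs = v \<and> set xs \<subseteq> F)"

text \<open>The oriented edge [t,s] starting at t is identified with its endpoint s;
  b t is the bijection N_t \<rightarrow> P_t.\<close>
definition complete_tree_system ::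
  "'v set \<Rightarrow> ('v \<Rightarrow> 'v \<Rightarrow> bool) \<Rightarrow> 'a topology \<Rightarrow> ('v \<Rightarrow> 'b topology) \<Rightarrow> ('v \<Rightarrow> 'b set)
    \<Rightarrow> ('v \<Rightarrow> 'v \<Rightarrow> 'b) \<Rightarrow> bool" where
  "complete_tree_system V E X XX P b \<longleftrightarrow>
     infinite_valence_tree V E \<and>
     (\<forall>t\<in>V. peripheral_extension X (XX t) (P t) \<and> bij_betw (b t) {s. E t s} (P t))"

definition glued :: "('v \<Rightarrow> 'v \<Rightarrow> bool) \<Rightarrow> ('v \<Rightarrow> 'v \<Rightarrow> 'b) \<Rightarrow> 'v set \<Rightarrow> 'v \<times> 'b \<Rightarrow> 'v \<times> 'b \<Rightarrow> bool" where
  "glued E b F p q \<longleftrightarrow> p = q \<or>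
     (\<exists>t s. t \<in> F \<and> s \<in> F \<and> E t s \<and> p = (t, b t s) \<and> q = (s, b s t))"

definition wcls :: "('v \<Rightarrow> 'v \<Rightarrow> bool) \<Rightarrow> ('v \<Rightarrow> 'b topology) \<Rightarrow> ('v \<Rightarrow> 'v \<Rightarrow> 'b) \<Rightarrow> 'v set
    \<Rightarrow> 'v \<times> 'b \<Rightarrow> ('v \<times> 'b) set" where
  "wcls E XX b F p = {q \<in> topspace (sum_topology XX F). glued E b F p q}"

definition wedgeF :: "('v \<Rightarrow> 'v \<Rightarrow> bool) \<Rightarrow> ('v \<Rightarrow> 'b topology) \<Rightarrow> ('v \<Rightarrow> 'v \<Rightarrow> 'b) \<Rightarrow> 'v set
    \<Rightarrow> ('v \<times> 'b) set topology" where
  "wedgeF E XX b F = quotient_topology (sum_topology XX F) (wcls E XX b F)"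

text \<open>toward E F' s t t': t is the vertex of F' nearest to s (s not in F') and t' is the
  neighbour of t on the path from t to s.\<close>
definition toward :: "('v \<Rightarrow> 'v \<Rightarrow> bool) \<Rightarrow> 'v set \<Rightarrow> 'v \<Rightarrow> 'v \<Rightarrow> 'v \<Rightarrow> bool" where
  "toward E F' s t t' \<longleftrightarrow> t \<in> F' \<and>
     (\<exists>rest. walk E (t # t' # rest) \<and> distinct (t # t' # rest) \<and>
             last (t # t' # rest) = s \<and> set (t' # rest) \<inter> F' = {})"

definition rhoR :: "('v \<Rightarrow> 'v \<Rightarrow> bool) \<Rightarrow> ('v \<Rightarrow> 'b topology) \<Rightarrow> ('v \<Rightarrow> 'v \<Rightarrow> 'b) \<Rightarrow> 'v set
    \<Rightarrow> 'v \<times> 'b \<Rightarrow> ('v \<times> 'b) set" where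
  "rhoR E XX b F' p =
     (if fst p \<in> F' then wcls E XX b F' p
      else (let (t, t') = (SOME (t, t'). toward E F' (fst p) t t') in wcls E XX b F' (t, b t t')))"

text \<open>The bonding map rho_{F,F'} : wedge_F \<rightarrow> wedge_F', computed on a representative.\<close>
definition rho :: "('v \<Rightarrow> 'v \<Rightarrow> bool) \<Rightarrow> ('v \<Rightarrow> 'b topology) \<Rightarrow> ('v \<Rightarrow> 'v \<Rightarrow> 'b) \<Rightarrow> 'v set
    \<Rightarrow> ('v \<times> 'b) set \<Rightarrow> ('v \<times> 'b) set" where
  "rho E XX b F' c = rhoR E XX b F' (SOME p. p \<in> c)"

definition wedge :: "'v set \<Rightarrow> ('v \<Rightarrow> 'v \<Rightarrow> bool) \<Rightarrow> ('v \<Rightarrow> 'b topology) \<Rightarrow> ('v \<Rightarrow> 'v \<Rightarrow> 'b)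
    \<Rightarrow> ('v set \<Rightarrow> ('v \<times> 'b) set) topology" where
  "wedge V E XX b =
     subtopology (product_topology (wedgeF E XX b) {F. fsubtree V E F})
       {x \<in> topspace (product_topology (wedgeF E XX b) {F. fsubtree V E F}).
          \<forall>F F'. fsubtree V E F \<and> fsubtree V E F' \<and> F' \<subseteq> F \<longrightarrow> rho E XX b F' (x F) = x F'}"

text \<open>p_{|e|} for e = [t,t']: the point of the wedge whose coordinate in every finite subtree
  containing e is the class of b_t([t,t']) (= class of b_{t'}([t',t])).\<close>
definition wedge_points :: "'v set \<Rightarrow> ('v \<Rightarrow> 'v \<Rightarrow> bool) \<Rightarrow> ('v \<Rightarrow> 'b topology) \<Rightarrow> ('v \<Rightarrow> 'v \<Rightarrow> 'b)
    \<Rightarrow> ('v set \<Rightarrow> ('v \<times> 'b) set) set" where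
  "wedge_points V E XX b =
     {x \<in> topspace (wedge V E XX b). \<exists>t t'. t \<in> V \<and> E t t' \<and>
        (\<forall>F. fsubtree V E F \<and> t \<in> F \<and> t' \<in> F \<longrightarrow> x F = wcls E XX b F (t, b t t'))}"

end

theory Submission
  imports Defs
begin
lemma istopology_quotient:
  "istopology (\<lambda>U. U \<subseteq> f ` topspace X \<and> openin X {x \<in> topspace X. f x \<in> U})"
proof -
  have 1: "{x \<in> topspace X. f x \<in> S \<inter> T} = {x \<in> topspace X. f x \<in> S} \<inter> {x \<in> topspace X. f x \<in> T}" for S T
    by auto
  have 2: "{x \<in> topspace X. f x \<in> \<Union>K} = (\<Union>U\<in>K. {x \<in> topspace X. f x \<in> U})" for K
    by auto
  show ?thesis
    unfolding istopology_def 1 2 by auto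
qed

lemma openin_quotient_topology:
  "openin (quotient_topology X f) U \<longleftrightarrow> U \<subseteq> f ` topspace X \<and> openin X {x \<in> topspace X. f x \<in> U}"
  unfolding quotient_topology_def using istopology_quotient[of f X] by simp

lemma topspace_quotient_topology [simp]:
  "topspace (quotient_topology X f) = f ` topspace X"
proof -
  have "{x \<in> topspace X. f x \<in> f ` topspace X} = topspace X" by auto
  then have "openin (quotient_topology X f) (f ` topspace X)"
    by (simp add: openin_quotient_topology)
  then show ?thesis
    by (meson openin_quotient_topology openin_subset openin_topspace subset_antisym)
qed

lemma quotient_map_quotient_topology:
  "quotient_map X (quotient_topology X f) f"
  unfolding quotient_map_def by (auto simp: openin_quotient_topology)

lemma continuous_map_modify_isolated:
  assumes f: "continuous_map S Y f"
    and iso: "\<And>d. d \<in> D \<Longrightarrow> openin S {d}"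
    and op: "openin S (topspace S - D)"
    and eq: "\<And>x. x \<in> topspace S - D \<Longrightarrow> g x = f x"
    and im: "g ` topspace S \<subseteq> topspace Y"
  shows "continuous_map S Y g"
  unfolding continuous_map_def
proof (intro conjI allI impI)
  show "g \<in> topspace S \<rightarrow> topspace Y" using im by auto
  fix U assume U: "openin Y U"
  have "{x \<in> topspace S. g x \<in> U} =
     ({x \<in> topspace S. f x \<in> U} \<inter> (topspace S - D)) \<union> \<Union>{{d} |d. d \<in> D \<and> d \<in> topspace S \<and> g d \<in> U}"
  proof (rule set_eqI, rule iffI)
    fix x assume x: "x \<in> {x \<in> topspace S. g x \<in> U}"
    show "x \<in> ({x \<in> topspace S. f x \<in> U} \<inter> (topspace S - D)) \<union> \<Union>{{d} |d. d \<in> D \<and> d \<in> topspace S \<and> g d \<in> U}"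
    proof (cases "x \<in> D")
      case True then show ?thesis using x by blast
    next
      case False then show ?thesis using x eq[of x] by auto
    qed
  qed (use eq in auto)
  moreover have "openin S ({x \<in> topspace S. f x \<in> U} \<inter> (topspace S - D))"
    using f U op by (auto simp: continuous_map_def)
  moreover have "openin S (\<Union>{{d} |d. d \<in> D \<and> d \<in> topspace S \<and> g d \<in> U})"
    using iso by (intro openin_Union) auto
  ultimately show "openin S {x \<in> topspace S. g x \<in> U}" by (metis (no_types, lifting) openin_Un)
qed

lemma continuous_map_from_sum:
  assumes "\<And>i. i \<in> I \<Longrightarrow> continuous_map (X i) Y (\<lambda>x. f (i, x))"
  shows "continuous_map (sum_topology X I) Y f"
  unfolding continuous_map_def
proof (intro conjI allI impI)
  show "f \<in> topspace (sum_topology X I) \<rightarrow> topspace Y"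
    using assms by (force simp: continuous_map_def)
  fix U assume U: "openin Y U"
  show "openin (sum_topology X I) {x \<in> topspace (sum_topology X I). f x \<in> U}"
    unfolding openin_sum_topology
  proof (intro conjI ballI)
    fix i assume i: "i \<in> I"
    have "{x. (i, x) \<in> {x \<in> topspace (sum_topology X I). f x \<in> U}} = {x \<in> topspace (X i). f (i, x) \<in> U}"
      using i by auto
    then show "openin (X i) {x. (i, x) \<in> {x \<in> topspace (sum_topology X I). f x \<in> U}}"
      using assms[OF i] U by (simp add: continuous_map_def)
  qed auto
qed

lemma compact_space_sum_finite:
  assumes "finite I" "\<And>i. i \<in> I \<Longrightarrow> compact_space (X i)"
  shows "compact_space (sum_topology X I)"
proof -
  have "topspace (sum_topology X I) = \<Union>((\<lambda>i. Pair i ` topspace (X i)) ` I)"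
    by auto
  moreover have "compactin (sum_topology X I) (\<Union>((\<lambda>i. Pair i ` topspace (X i)) ` I))"
  proof (rule compactin_Union)
    show "finite ((\<lambda>i. Pair i ` topspace (X i)) ` I)" using assms by simp
    fix S assume "S \<in> (\<lambda>i. Pair i ` topspace (X i)) ` I"
    then obtain i where i: "i \<in> I" and S: "S = Pair i ` topspace (X i)" by auto
    show "compactin (sum_topology X I) S"
      unfolding S
      by (rule image_compactin[OF _ continuous_map_component_injection[OF i]])
         (use assms(2)[OF i] in \<open>simp add: compact_space_def\<close>)
  qed
  ultimately show ?thesis by (simp add: compact_space_def)
qed

locale cts =
  fixes V :: "'v set" and E :: "'v \<Rightarrow> 'v \<Rightarrow> bool" and X :: "'a topology"
    and XX :: "'v \<Rightarrow> 'b topology" and P :: "'v \<Rightarrow> 'b set" and b :: "'v \<Rightarrow> 'v \<Rightarrow> 'b"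
  assumes cts: "complete_tree_system V E X XX P b"
begin

lemma tree: "is_tree V E"
  using cts by (simp add: complete_tree_system_def infinite_valence_tree_def)

lemma E_sym: "E x y \<Longrightarrow> E y x"
  using tree by (simp add: is_tree_def)

lemma E_irrefl: "\<not> E x x"
  using tree by (simp add: is_tree_def)

lemma E_V: "E x y \<Longrightarrow> x \<in> V \<and> y \<in> V"
  using tree by (simp add: is_tree_def)

lemma pe: "t \<in> V \<Longrightarrow> peripheral_extension X (XX t) (P t)"
  using cts by (simp add: complete_tree_system_def)

lemma bij: "t \<in> V \<Longrightarrow> bij_betw (b t) {s. E t s} (P t)"
  using cts by (simp add: complete_tree_system_def)

lemma b_in: "E t s \<Longrightarrow> b t s \<in> P t"
  using bij[of t] E_V[of t s] by (auto simp: bij_betw_def)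

lemma P_top: "t \<in> V \<Longrightarrow> P t \<subseteq> topspace (XX t)"
  using pe by (simp add: peripheral_extension_def)

lemma b_top: "E t s \<Longrightarrow> b t s \<in> topspace (XX t)"
  using b_in P_top E_V by blast

lemma b_inj: "E t s \<Longrightarrow> E t s' \<Longrightarrow> b t s = b t s' \<Longrightarrow> s = s'"
  using bij[of t] E_V[of t s] by (auto simp: bij_betw_def inj_on_def)

lemma compact_XX: "t \<in> V \<Longrightarrow> compact_space (XX t)"
  using pe by (simp add: peripheral_extension_def)

lemma metrizable_XX: "t \<in> V \<Longrightarrow> metrizable_space (XX t)"
  using pe by (simp add: peripheral_extension_def)

lemma P_iso: assumes "t \<in> V" "y \<in> P t" shows "openin (XX t) {y}"
proof -
  have d: "subtopology (XX t) (P t) = discrete_topology (P t)" and o: "openin (XX t) (P t)"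
    using pe[OF assms(1)] by (auto simp: peripheral_extension_def)
  have "openin (subtopology (XX t) (P t)) {y}"
    using d assms(2) by simp
  then obtain U where "openin (XX t) U" "{y} = U \<inter> P t"
    by (auto simp: openin_subtopology)
  then show ?thesis using o by (metis openin_Int)
qed

lemma b_iso: "E t s \<Longrightarrow> openin (XX t) {b t s}"
  using P_iso b_in E_V by blast

lemma topspace_ne: "t \<in> V \<Longrightarrow> topspace (XX t) \<noteq> {}"
  using pe[of t] by (auto simp: peripheral_extension_def)

abbreviation "ST F \<equiv> sum_topology XX F"

definition Dset :: "'v set \<Rightarrow> ('v \<times> 'b) set" where
  "Dset F = {(t, b t s) | t s. t \<in> F \<and> s \<in> F \<and> E t s}"

lemma glued_sym: "glued E b F p q \<Longrightarrow> glued E b F q p"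
  unfolding glued_def using E_sym by blast

lemma glued_trans: "glued E b F p q \<Longrightarrow> glued E b F q r \<Longrightarrow> glued E b F p r"
proof -
  assume pq: "glued E b F p q" and qr: "glued E b F q r"
  show ?thesis
  proof (cases "p = q \<or> q = r")
    case True then show ?thesis using pq qr by auto
  next
    case False
    then obtain t s where ts: "t \<in> F" "s \<in> F" "E t s" "p = (t, b t s)" "q = (s, b s t)"
      using pq by (auto simp: glued_def)
    obtain t2 s2 where ts2: "t2 \<in> F" "s2 \<in> F" "E t2 s2" "q = (t2, b t2 s2)" "r = (s2, b s2 t2)"
      using qr False by (auto simp: glued_def)
    have "t2 = s" using ts ts2 by simp
    then have "b s t = b s s2" using ts ts2 by simp
    then have "t = s2" using b_inj[of s t s2] ts ts2 E_sym \<open>t2 = s\<close> by blast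
    then have "p = r" using ts ts2 \<open>t2 = s\<close> by simp
    then show ?thesis by (simp add: glued_def)
  qed
qed

lemma wcls_self: "q \<in> topspace (ST F) \<Longrightarrow> q \<in> wcls E XX b F q"
  by (simp add: wcls_def glued_def)

lemma wcls_sub: "wcls E XX b F q \<subseteq> topspace (ST F)"
  by (auto simp: wcls_def)

lemma wcls_eq: "q' \<in> wcls E XX b F q \<Longrightarrow> wcls E XX b F q' = wcls E XX b F q"
  unfolding wcls_def using glued_sym glued_trans by blast

lemma wcls_eq_iff: "q \<in> topspace (ST F) \<Longrightarrow> wcls E XX b F q' = wcls E XX b F q \<longleftrightarrow> q \<in> wcls E XX b F q'"
  by (metis wcls_eq wcls_self)

lemma wcls_single: "q \<notin> Dset F \<Longrightarrow> q \<in> topspace (ST F) \<Longrightarrow> wcls E XX b F q = {q}"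
  unfolding wcls_def glued_def Dset_def by auto

lemma Dset_finite: "finite F \<Longrightarrow> finite (Dset F)"
proof -
  assume F: "finite F"
  have "Dset F \<subseteq> (\<lambda>(t,s). (t, b t s)) ` (F \<times> F)"
    unfolding Dset_def by auto
  then show ?thesis using F by (meson finite_SigmaI finite_imageI finite_subset)
qed

lemma Dset_top: "Dset F \<subseteq> topspace (ST F)"
  unfolding Dset_def using b_top by auto

lemma Dset_iso: "d \<in> Dset F \<Longrightarrow> openin (ST F) {d}"
proof -
  assume "d \<in> Dset F"
  then obtain t s where ts: "t \<in> F" "s \<in> F" "E t s" "d = (t, b t s)"
    unfolding Dset_def by auto
  show ?thesis
    unfolding openin_sum_topology
  proof (intro conjI ballI)
    show "{d} \<subseteq> Sigma F (topspace \<circ> XX)" using ts b_top by auto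
    fix i assume "i \<in> F"
    show "openin (XX i) {x. (i, x) \<in> {d}}"
    proof (cases "i = t")
      case True
      then have "{x. (i, x) \<in> {d}} = {b t s}" using ts by auto
      then show ?thesis using b_iso[OF ts(3)] True by simp
    next
      case False
      then have "{x. (i, x) \<in> {d}} = {}" using ts by auto
      then show ?thesis by simp
    qed
  qed
qed

lemma Dset_compl_open:
  assumes F: "finite F" "F \<subseteq> V"
  shows "openin (ST F) (topspace (ST F) - Dset F)"
  unfolding openin_sum_topology
proof (intro conjI ballI)
  show "topspace (ST F) - Dset F \<subseteq> Sigma F (topspace \<circ> XX)" by auto
  fix i assume i: "i \<in> F"
  have fin: "finite {x. (i, x) \<in> Dset F}"
  proof -
    have "{x. (i, x) \<in> Dset F} = snd ` (Dset F \<inter> {p. fst p = i})" by force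
    then show ?thesis using Dset_finite[OF F(1)] by simp
  qed
  have sub: "{x. (i, x) \<in> Dset F} \<subseteq> topspace (XX i)"
    using Dset_top[of F] i by force
  have "closedin (XX i) {x. (i, x) \<in> Dset F}"
    using metrizable_imp_t1_space[OF metrizable_XX] i F(2) fin sub
    by (meson subsetD t1_space_closedin_finite)
  then have "openin (XX i) (topspace (XX i) - {x. (i, x) \<in> Dset F})"
    by (simp add: openin_diff)
  moreover have "{x. (i, x) \<in> topspace (ST F) - Dset F} = topspace (XX i) - {x. (i, x) \<in> Dset F}"
    using i by auto
  ultimately show "openin (XX i) {x. (i, x) \<in> topspace (ST F) - Dset F}" by simp
qed

end

definition conn :: "('v \<Rightarrow> 'v \<Rightarrow> bool) \<Rightarrow> 'v set \<Rightarrow> bool" where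
  "conn E S \<longleftrightarrow> (\<forall>u\<in>S. \<forall>v\<in>S. \<exists>xs. walk E xs \<and> hd xs = u \<and> last xs = v \<and> set xs \<subseteq> S)"

lemma fsubtree_conn: "fsubtree V E F \<longleftrightarrow> F \<subseteq> V \<and> finite F \<and> F \<noteq> {} \<and> conn E F"
  by (simp add: fsubtree_def conn_def)

lemma walk_Cons: "walk E (x # xs) \<longleftrightarrow> xs = [] \<or> E x (hd xs) \<and> walk E xs"
  by (cases xs) (auto simp: walk_def)

lemma walk_single [simp]: "walk E [x]"
  by (simp add: walk_def)

lemma walk_snoc: "walk E xs \<Longrightarrow> E (last xs) y \<Longrightarrow> walk E (xs @ [y])"
  by (auto simp: walk_def successively_append_iff)

lemma walk_shorten:
  "walk E xs \<Longrightarrow> \<exists>ys. walk E ys \<and> distinct ys \<and> hd ys = hd xs \<and> last ys = last xs \<and> set ys \<subseteq> set xs"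
proof (induction "length xs" arbitrary: xs rule: less_induct)
  case less
  show ?case
  proof (cases "distinct xs")
    case True then show ?thesis using less.prems by blast
  next
    case False
    then obtain as ys zs y where xs: "xs = as @ [y] @ ys @ [y] @ zs"
      using not_distinct_decomp by blast
    let ?w = "as @ [y] @ zs"
    have "walk E ?w"
      using less.prems unfolding xs walk_def
      by (auto simp: successively_append_iff successively_Cons split: if_splits)
    moreover have "length ?w < length xs" using xs by simp
    ultimately obtain ws where ws: "walk E ws \<and> distinct ws \<and> hd ws = hd ?w \<and> last ws = last ?w \<and> set ws \<subseteq> set ?w"
      using less.hyps by blast
    have "hd ?w = hd xs" using xs by (cases as) auto
    moreover have "last ?w = last xs" using xs by (cases "zs = []") auto
    moreover have "set ?w \<subseteq> set xs" using xs by auto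
    ultimately show ?thesis using ws by (intro exI[of _ ws]) auto
  qed
qed

context cts begin

lemma conn_insert:
  assumes c: "conn E S" and z: "z \<in> S" and e: "E z y"
  shows "conn E (insert y S)"
  unfolding conn_def
proof (intro ballI)
  fix u v assume u: "u \<in> insert y S" and v: "v \<in> insert y S"
  show "\<exists>xs. walk E xs \<and> hd xs = u \<and> last xs = v \<and> set xs \<subseteq> insert y S"
  proof (cases "u = y")
    case uy: True
    show ?thesis
    proof (cases "v = y")
      case True then show ?thesis using uy by (intro exI[of _ "[y]"]) auto
    next
      case False
      then have "v \<in> S" using v by auto
      then obtain xs where xs: "walk E xs" "hd xs = z" "last xs = v" "set xs \<subseteq> S"
        using c z unfolding conn_def by blast
      have "xs \<noteq> []" using xs by (auto simp: walk_def)
      then show ?thesis using xs uy E_sym[OF e]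
        by (intro exI[of _ "y # xs"]) (auto simp: walk_Cons)
    qed
  next
    case False
    then have uS: "u \<in> S" using u by auto
    show ?thesis
    proof (cases "v = y")
      case True
      obtain xs where xs: "walk E xs" "hd xs = u" "last xs = z" "set xs \<subseteq> S"
        using c z uS unfolding conn_def by blast
      have "xs \<noteq> []" using xs by (auto simp: walk_def)
      then show ?thesis using xs True e
        by (intro exI[of _ "xs @ [y]"]) (auto simp: walk_snoc)
    next
      case False
      then have "v \<in> S" using v by auto
      then show ?thesis using c uS unfolding conn_def by blast
    qed
  qed
qed

lemma conn_walk:
  "walk E w \<Longrightarrow> conn E S \<Longrightarrow> hd w \<in> S \<Longrightarrow> conn E (S \<union> set w)"
proof (induction w arbitrary: S)
  case Nil then show ?case by (simp add: walk_def)
next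
  case (Cons a w)
  show ?case
  proof (cases "w = []")
    case True then show ?thesis using Cons by (simp add: insert_absorb)
  next
    case False
    then have e: "E a (hd w)" and ww: "walk E w" using Cons.prems by (auto simp: walk_Cons)
    have "conn E (insert (hd w) S)"
      using conn_insert[OF Cons.prems(2) _ e] Cons.prems(3) by simp
    then have "conn E (insert (hd w) S \<union> set w)"
      using Cons.IH[OF ww, of "insert (hd w) S"] by simp
    moreover have "insert (hd w) S \<union> set w = S \<union> set (a # w)"
      using False Cons.prems(3) by (auto simp: hd_in_set)
    ultimately show ?thesis by simp
  qed
qed

lemma walk_V: "walk E xs \<Longrightarrow> hd xs \<in> V \<Longrightarrow> set xs \<subseteq> V"
proof (induction xs)
  case Nil then show ?case by simp
next
  case (Cons a xs)
  then show ?case using E_V by (cases xs) (auto simp: walk_Cons)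
qed

lemma tree_conn: "u \<in> V \<Longrightarrow> v \<in> V \<Longrightarrow> \<exists>xs. walk E xs \<and> hd xs = u \<and> last xs = v"
  using tree by (simp add: is_tree_def)

lemma fsubtree_edge: "E t t' \<Longrightarrow> fsubtree V E {t, t'}"
proof -
  assume e: "E t t'"
  have "conn E {t}" unfolding conn_def by (auto intro!: exI[of _ "[t]"])
  then have "conn E (insert t' {t})" using conn_insert[OF _ _ e] by simp
  then show ?thesis using E_V[OF e] by (simp add: fsubtree_conn insert_commute)
qed

lemma fsubtree_extend:
  assumes F: "fsubtree V E F" and e: "E t t'"
  shows "\<exists>G. fsubtree V E G \<and> F \<subseteq> G \<and> t \<in> G \<and> t' \<in> G"
proof -
  obtain u where u: "u \<in> F" using F by (auto simp: fsubtree_def)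
  have uV: "u \<in> V" using F u by (auto simp: fsubtree_def)
  obtain w where w: "walk E w" "hd w = u" "last w = t"
    using tree_conn[OF uV] E_V[OF e] by blast
  have c1: "conn E (F \<union> set w)"
    using conn_walk[OF w(1)] F u w(2) by (auto simp: fsubtree_conn)
  have tw: "t \<in> set w" using w by (metis last_in_set walk_def)
  have c2: "conn E (insert t' (F \<union> set w))"
    using conn_insert[OF c1 _ e] tw by simp
  have "set w \<subseteq> V" using walk_V[OF w(1)] w(2) uV by simp
  then have "fsubtree V E (insert t' (F \<union> set w))"
    using c2 F E_V[OF e] by (auto simp: fsubtree_conn)
  then show ?thesis using tw by blast
qed

lemma toward_ex:
  assumes F': "F' \<noteq> {}" "F' \<subseteq> V" and s: "s \<in> V" "s \<notin> F'"
  shows "\<exists>t t'. toward E F' s t t'"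
proof -
  obtain u where u: "u \<in> F'" using F' by auto
  obtain xs where xs: "walk E xs" "hd xs = u" "last xs = s"
    using tree_conn[of u s] u F' s by blast
  obtain ys where ys: "walk E ys" "distinct ys" "hd ys = u" "last ys = s"
    using walk_shorten[OF xs(1)] xs by auto
  have ne: "ys \<noteq> []" using ys by (auto simp: walk_def)
  have "\<exists>x\<in>set ys. x \<in> F'" using ys(3) ne u hd_in_set by blast
  then obtain as t cs where split: "ys = as @ t # cs" "t \<in> F'" "\<forall>z\<in>set cs. z \<notin> F'"
    using split_list_last_prop[of ys "\<lambda>x. x \<in> F'"] by blast
  have "cs \<noteq> []" using split ys(4) s(2) by auto
  then obtain t' rest where cs: "cs = t' # rest" by (cases cs) auto
  have "walk E (t # t' # rest)"
    using ys(1) unfolding split cs walk_def by (simp add: successively_append_iff)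
  moreover have "distinct (t # t' # rest)" using ys(2) split cs by simp
  moreover have "last (t # t' # rest) = s" using ys(4) split cs by simp
  moreover have "set (t' # rest) \<inter> F' = {}" using split cs by auto
  ultimately show ?thesis using split(2) unfolding toward_def by blast
qed

lemma toward_props: "toward E F' s t t' \<Longrightarrow> t \<in> F' \<and> E t t' \<and> t' \<notin> F'"
  unfolding toward_def by (auto simp: walk_def)

end

context cts begin

abbreviation "WF F \<equiv> wedgeF E XX b F"

lemma quotient_map_wcls: "quotient_map (ST F) (WF F) (wcls E XX b F)"
  unfolding wedgeF_def by (rule quotient_map_quotient_topology)

lemma topspace_WF: "topspace (WF F) = wcls E XX b F ` topspace (ST F)"
  unfolding wedgeF_def by simp

lemma continuous_wcls: "continuous_map (ST F) (WF F) (wcls E XX b F)"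
  by (rule quotient_imp_continuous_map[OF quotient_map_wcls])

lemma compact_WF: assumes "fsubtree V E F" shows "compact_space (WF F)"
proof -
  have "compact_space (ST F)"
    using assms by (intro compact_space_sum_finite) (auto simp: fsubtree_def compact_XX)
  then have "compactin (WF F) (wcls E XX b F ` topspace (ST F))"
    unfolding compact_space_def by (rule image_compactin[OF _ continuous_wcls])
  then show ?thesis by (simp add: compact_space_def topspace_WF)
qed

lemma rhoR_in:
  assumes "s \<in> F'" "y \<in> topspace (XX s)"
  shows "rhoR E XX b F' (s, y) = wcls E XX b F' (s, y)"
  using assms by (simp add: rhoR_def)

lemma rhoR_out:
  assumes F': "F' \<noteq> {}" "F' \<subseteq> V" and s: "s \<in> V" "s \<notin> F'"
  obtains t t' where "toward E F' s t t'" "\<And>y. rhoR E XX b F' (s, y) = wcls E XX b F' (t, b t t')"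
proof -
  let ?c = "SOME (x, y). toward E F' s x y"
  have "\<exists>p. (\<lambda>(x, y). toward E F' s x y) p" using toward_ex[OF F' s] by auto
  then have c: "(\<lambda>(x, y). toward E F' s x y) ?c" by (rule someI_ex)
  have "rhoR E XX b F' (s, y) = wcls E XX b F' (fst ?c, b (fst ?c) (snd ?c))" for y
    using s(2) unfolding rhoR_def by (simp add: Let_def case_prod_beta)
  moreover have "toward E F' s (fst ?c) (snd ?c)" using c by (simp add: case_prod_beta)
  ultimately show ?thesis using that by blast
qed

lemma rhoR_top:
  assumes F: "fsubtree V E F" and F': "fsubtree V E F'" and q: "q \<in> topspace (ST F)"
  shows "rhoR E XX b F' q \<in> topspace (WF F')"
proof -
  obtain s y where qs: "q = (s, y)" "s \<in> F" "y \<in> topspace (XX s)" using q by auto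
  show ?thesis
  proof (cases "s \<in> F'")
    case True
    then show ?thesis using qs rhoR_in[of s F' y] topspace_WF by auto
  next
    case False
    have "F' \<noteq> {}" "F' \<subseteq> V" "s \<in> V" using F F' qs by (auto simp: fsubtree_def)
    then obtain t t' where tw: "toward E F' s t t'" and eq: "\<And>y. rhoR E XX b F' (s, y) = wcls E XX b F' (t, b t t')"
      using rhoR_out False by metis
    have "(t, b t t') \<in> topspace (ST F')" using toward_props[OF tw] b_top by auto
    then show ?thesis using eq qs topspace_WF by auto
  qed
qed

lemma continuous_rhoR:
  assumes F: "fsubtree V E F" and F': "fsubtree V E F'"
  shows "continuous_map (ST F) (WF F') (rhoR E XX b F')"
proof (rule continuous_map_from_sum)
  fix s assume s: "s \<in> F"
  show "continuous_map (XX s) (WF F') (\<lambda>y. rhoR E XX b F' (s, y))"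
  proof (cases "s \<in> F'")
    case True
    have "continuous_map (XX s) (WF F') (wcls E XX b F' \<circ> Pair s)"
      using continuous_map_compose[OF continuous_map_component_injection[OF True] continuous_wcls] by simp
    moreover have "\<And>y. y \<in> topspace (XX s) \<Longrightarrow> rhoR E XX b F' (s, y) = (wcls E XX b F' \<circ> Pair s) y"
      using rhoR_in[OF True] by simp
    ultimately show ?thesis by (metis (no_types, lifting) continuous_map_eq)
  next
    case False
    have "F' \<noteq> {}" "F' \<subseteq> V" "s \<in> V" using F F' s by (auto simp: fsubtree_def)
    then obtain t t' where tw: "toward E F' s t t'" and eq: "\<And>y. rhoR E XX b F' (s, y) = wcls E XX b F' (t, b t t')"
      using rhoR_out False by metis
    have "(t, b t t') \<in> topspace (ST F')" using toward_props[OF tw] b_top by auto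
    then have "wcls E XX b F' (t, b t t') \<in> topspace (WF F')" using topspace_WF by auto
    then show ?thesis unfolding eq by simp
  qed
qed

lemma continuous_rho:
  assumes F: "fsubtree V E F" and F': "fsubtree V E F'"
  shows "continuous_map (WF F) (WF F') (rho E XX b F')"
proof (rule continuous_compose_quotient_map[OF quotient_map_wcls])
  show "continuous_map (ST F) (WF F') (rho E XX b F' \<circ> wcls E XX b F)"
  proof (rule continuous_map_modify_isolated[OF continuous_rhoR[OF F F'] Dset_iso])
    show "openin (ST F) (topspace (ST F) - Dset F)"
      using F by (intro Dset_compl_open) (auto simp: fsubtree_def)
    fix x assume x: "x \<in> topspace (ST F) - Dset F"
    then show "(rho E XX b F' \<circ> wcls E XX b F) x = rhoR E XX b F' x"
      using wcls_single[of x F] by (simp add: rho_def)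
  next
    show "(rho E XX b F' \<circ> wcls E XX b F) ` topspace (ST F) \<subseteq> topspace (WF F')"
    proof clarsimp
      fix s y assume "s \<in> F" "y \<in> topspace (XX s)"
      then have q: "(s, y) \<in> topspace (ST F)" by simp
      let ?q = "SOME p. p \<in> wcls E XX b F (s, y)"
      have "?q \<in> wcls E XX b F (s, y)" using wcls_self[OF q] by (rule someI)
      then have "?q \<in> topspace (ST F)" using wcls_sub by blast
      then show "rho E XX b F' (wcls E XX b F (s, y)) \<in> topspace (WF F')"
        unfolding rho_def using rhoR_top[OF F F'] by blast
    qed
  qed
qed

end

context cts begin

definition y0 :: "'v \<Rightarrow> 'b" where "y0 s = (SOME y. y \<in> topspace (XX s))"

lemma y0_top: "s \<in> V \<Longrightarrow> y0 s \<in> topspace (XX s)"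
  unfolding y0_def using topspace_ne[of s] by (simp add: some_in_eq)

definition emb :: "'v set \<Rightarrow> 'v \<times> 'b \<Rightarrow> 'v \<Rightarrow> 'b \<times> real" where
  "emb F q = (\<lambda>s\<in>F. if s = fst q then (snd q, 1) else (y0 s, 0))"

abbreviation "YT F \<equiv> product_topology (\<lambda>s. prod_topology (XX s) (euclideanreal)) F"

lemma continuous_emb:
  assumes F: "F \<subseteq> V"
  shows "continuous_map (ST F) (YT F) (emb F)"
proof (rule continuous_map_from_sum)
  fix t assume t: "t \<in> F"
  show "continuous_map (XX t) (YT F) (\<lambda>x. emb F (t, x))"
    unfolding continuous_map_componentwise
  proof (intro conjI ballI)
    show "(\<lambda>x. emb F (t, x)) ` topspace (XX t) \<subseteq> extensional F"
      by (auto simp: emb_def)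
    fix k assume k: "k \<in> F"
    show "continuous_map (XX t) (prod_topology (XX k) euclideanreal) (\<lambda>x. emb F (t, x) k)"
    proof (cases "k = t")
      case True
      have "continuous_map (XX t) (prod_topology (XX k) euclideanreal) (\<lambda>x. (x, 1))"
        using True by (simp add: continuous_map_pairwise o_def)
      then show ?thesis using k True by (simp add: emb_def)
    next
      case False
      have "(y0 k, 0) \<in> topspace (prod_topology (XX k) euclideanreal)"
        using y0_top k F by auto
      then have "continuous_map (XX t) (prod_topology (XX k) euclideanreal) (\<lambda>x. (y0 k, 0))"
        by simp
      then show ?thesis using k False by (simp add: emb_def)
    qed
  qed
qed

lemma emb_inj:
  assumes "q1 \<in> topspace (ST F)" "q2 \<in> topspace (ST F)" "emb F q1 = emb F q2"
  shows "q1 = q2"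
proof -
  obtain t1 y1 where q1: "q1 = (t1, y1)" by (cases q1)
  obtain t2 y2 where q2: "q2 = (t2, y2)" by (cases q2)
  have "t1 \<in> F" using assms(1) q1 by auto
  note q = q1 q2 this
  have "emb F q1 t1 = emb F q2 t1" using assms by simp
  then have "(y1, 1::real) = (if t1 = t2 then (y2, 1) else (y0 t1, 0))"
    using q by (simp add: emb_def)
  then show ?thesis using q by (auto split: if_splits)
qed

lemma metrizable_YT: assumes F: "finite F" "F \<subseteq> V" shows "metrizable_space (YT F)"
proof -
  have "metrizable_space (prod_topology (XX s) euclideanreal)" if "s \<in> F" for s
    using metrizable_XX[of s] that F by (auto simp: metrizable_space_prod_topology metrizable_space_euclidean)
  then show ?thesis
    using F by (simp add: metrizable_space_product_topology countable_finite)
qed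

lemma metrizable_WF:
  assumes F: "fsubtree V E F"
  shows "metrizable_space (WF F)"
proof -
  have Fin: "finite F" "F \<subseteq> V" using F by (auto simp: fsubtree_def)
  define psi where "psi c = emb F (SOME q. q \<in> c)" for c
  have rep: "(SOME q'. q' \<in> wcls E XX b F q) \<in> wcls E XX b F q" if "q \<in> topspace (ST F)" for q
    using wcls_self[OF that] by (rule someI)
  have cpsi: "continuous_map (WF F) (YT F) psi"
  proof (rule continuous_compose_quotient_map[OF quotient_map_wcls])
    show "continuous_map (ST F) (YT F) (psi \<circ> wcls E XX b F)"
    proof (rule continuous_map_modify_isolated[OF continuous_emb[OF Fin(2)] Dset_iso])
      show "openin (ST F) (topspace (ST F) - Dset F)"
        using Fin by (intro Dset_compl_open) auto
      fix x assume x: "x \<in> topspace (ST F) - Dset F"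
      then show "(psi \<circ> wcls E XX b F) x = emb F x"
        using wcls_single[of x F] by (simp add: psi_def)
    next
      show "(psi \<circ> wcls E XX b F) ` topspace (ST F) \<subseteq> topspace (YT F)"
      proof
        fix z assume "z \<in> (psi \<circ> wcls E XX b F) ` topspace (ST F)"
        then obtain q where q: "q \<in> topspace (ST F)" "z = psi (wcls E XX b F q)" by auto
        have r: "(SOME q'. q' \<in> wcls E XX b F q) \<in> topspace (ST F)"
          using rep[OF q(1)] wcls_sub by blast
        have "emb F (SOME q'. q' \<in> wcls E XX b F q) \<in> topspace (YT F)"
          by (rule subsetD[OF continuous_map_image_subset_topspace[OF continuous_emb[OF Fin(2)]] imageI[OF r]])
        then show "z \<in> topspace (YT F)"
          using q by (simp add: psi_def)
      qed
    qed
  qed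
  have inj: "inj_on psi (topspace (WF F))"
  proof (rule inj_onI)
    fix c1 c2 assume c1: "c1 \<in> topspace (WF F)" and c2: "c2 \<in> topspace (WF F)" and eq: "psi c1 = psi c2"
    obtain q1 where q1: "q1 \<in> topspace (ST F)" "c1 = wcls E XX b F q1" using c1 unfolding topspace_WF by blast
    obtain q2 where q2: "q2 \<in> topspace (ST F)" "c2 = wcls E XX b F q2" using c2 unfolding topspace_WF by blast
    let ?r1 = "SOME q'. q' \<in> wcls E XX b F q1" and ?r2 = "SOME q'. q' \<in> wcls E XX b F q2"
    have r1: "?r1 \<in> wcls E XX b F q1" using rep[OF q1(1)] .
    have r2: "?r2 \<in> wcls E XX b F q2" using rep[OF q2(1)] .
    have t1: "?r1 \<in> topspace (ST F)" using r1 wcls_sub by blast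
    have t2: "?r2 \<in> topspace (ST F)" using r2 wcls_sub by blast
    have "emb F ?r1 = emb F ?r2" using eq unfolding psi_def q1(2) q2(2) .
    then have "?r1 = ?r2"
      by (rule emb_inj[OF t1 t2])
    have "c1 = wcls E XX b F ?r1" using wcls_eq[OF r1] q1(2) by simp
    also have "\<dots> = wcls E XX b F ?r2" using \<open>?r1 = ?r2\<close> by (rule arg_cong)
    also have "\<dots> = c2" using wcls_eq[OF r2] q2(2) by simp
    finally show "c1 = c2" .
  qed
  have "embedding_map (WF F) (YT F) psi"
    using continuous_imp_embedding_map[OF cpsi compact_WF[OF F] metrizable_imp_Hausdorff_space[OF metrizable_YT[OF Fin]] inj] .
  then have hom: "WF F homeomorphic_space subtopology (YT F) (psi ` topspace (WF F))"
    by (rule embedding_map_imp_homeomorphic_space)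
  have "metrizable_space (subtopology (YT F) (psi ` topspace (WF F)))"
    by (rule metrizable_space_subtopology[OF metrizable_YT[OF Fin]])
  then show ?thesis
    using homeomorphic_metrizable_space[OF hom] by simp
qed

end

context cts begin

abbreviation "PF \<equiv> {F. fsubtree V E F}"
abbreviation "PT \<equiv> product_topology (wedgeF E XX b) PF"
abbreviation "Thr \<equiv> {x \<in> topspace PT. \<forall>F F'. fsubtree V E F \<and> fsubtree V E F' \<and> F' \<subseteq> F \<longrightarrow> rho E XX b F' (x F) = x F'}"

lemma wedge_eq: "wedge V E XX b = subtopology PT Thr"
  by (simp add: wedge_def)

lemma topspace_wedge: "topspace (wedge V E XX b) = Thr"
  unfolding wedge_eq by auto

lemma glued_mono: "glued E b F p q \<Longrightarrow> F \<subseteq> G \<Longrightarrow> glued E b G p q"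
  unfolding glued_def by blast

lemma key:
  assumes e: "E t t'" and G: "fsubtree V E G" "t \<in> G" "t' \<in> G"
    and x: "x \<in> Thr" and xc: "x {t, t'} = wcls E XX b {t, t'} (t, b t t')"
  shows "x G = wcls E XX b G (t, b t t')"
proof -
  let ?F0 = "{t, t'}"
  let ?c = "wcls E XX b ?F0 (t, b t t')"
  have F0: "fsubtree V E ?F0" using fsubtree_edge[OF e] .
  have sub: "?F0 \<subseteq> G" using G by auto
  have "x G \<in> topspace (WF G)" using x G(1) by (auto simp: PiE_iff)
  then obtain q where q: "q \<in> topspace (ST G)" "x G = wcls E XX b G q"
    unfolding topspace_WF by blast
  let ?r = "SOME r. r \<in> wcls E XX b G q"
  have r: "?r \<in> wcls E XX b G q" using wcls_self[OF q(1)] by (rule someI)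
  have rt: "?r \<in> topspace (ST G)" using r wcls_sub by blast
  have xr: "x G = wcls E XX b G ?r" using wcls_eq[OF r] q(2) by simp
  have "rho E XX b ?F0 (x G) = x ?F0" using x G(1) F0 sub by blast
  then have rc: "rhoR E XX b ?F0 ?r = ?c" using xc q(2) by (simp add: rho_def)
  obtain s y where sy: "?r = (s, y)" "s \<in> G" "y \<in> topspace (XX s)" using rt by auto
  show ?thesis
  proof (cases "s \<in> ?F0")
    case True
    have "wcls E XX b ?F0 (s, y) = ?c" using rc sy rhoR_in[OF True sy(3)] by simp
    moreover have "(s, y) \<in> wcls E XX b ?F0 (s, y)" using True sy by (intro wcls_self) auto
    ultimately have "(s, y) \<in> ?c" by simp
    then have "glued E b ?F0 (t, b t t') (s, y)" by (simp add: wcls_def)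
    then have "glued E b G (t, b t t') (s, y)" using glued_mono sub by blast
    then have "?r \<in> wcls E XX b G (t, b t t')" using sy rt by (simp add: wcls_def)
    then show ?thesis using xr wcls_eq by simp
  next
    case False
    have "?F0 \<noteq> {}" "?F0 \<subseteq> V" "s \<in> V" using F0 G(1) sy(2) by (auto simp: fsubtree_def)
    then obtain u u' where tw: "toward E ?F0 s u u'" and eq: "\<And>y. rhoR E XX b ?F0 (s, y) = wcls E XX b ?F0 (u, b u u')"
      using rhoR_out False by metis
    have u: "u \<in> ?F0" "E u u'" "u' \<notin> ?F0" using toward_props[OF tw] by auto
    have "wcls E XX b ?F0 (u, b u u') = ?c" using rc sy eq by simp
    moreover have "(t, b t t') \<in> ?c" using e by (intro wcls_self) (auto intro: b_top)
    ultimately have "(t, b t t') \<in> wcls E XX b ?F0 (u, b u u')" by simp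
    then have "glued E b ?F0 (u, b u u') (t, b t t')" by (simp add: wcls_def)
    then have False
    proof (unfold glued_def, elim disjE exE conjE)
      assume "(u, b u u') = (t, b t t')"
      then have "u = t" "b t u' = b t t'" by auto
      then have "u' = t'" using b_inj u e by blast
      then show False using u by simp
    next
      fix v w assume vw: "v \<in> ?F0" "w \<in> ?F0" "E v w" "(u, b u u') = (v, b v w)" "(t, b t t') = (w, b w v)"
      then have "v = u" "b u u' = b u w" by auto
      then have "u' = w" using b_inj u vw by blast
      then show False using u vw by simp
    qed
    then show ?thesis ..
  qed
qed

lemma isolated:
  assumes p: "p \<in> wedge_points V E XX b"
  shows "openin (wedge V E XX b) {p}"
proof -
  obtain t t' where tt: "t \<in> V" "E t t'"
    and pF: "\<And>F. fsubtree V E F \<Longrightarrow> t \<in> F \<Longrightarrow> t' \<in> F \<Longrightarrow> p F = wcls E XX b F (t, b t t')"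
    using p unfolding wedge_points_def by blast
  have pT: "p \<in> Thr" using p unfolding wedge_points_def topspace_wedge by blast
  let ?F0 = "{t, t'}"
  let ?c = "wcls E XX b ?F0 (t, b t t')"
  have F0: "fsubtree V E ?F0" using fsubtree_edge[OF tt(2)] .
  have tb: "(t, b t t') \<in> topspace (ST ?F0)" using tt b_top by auto
  have oc: "openin (WF ?F0) {?c}"
    unfolding wedgeF_def openin_quotient_topology
  proof
    show "{?c} \<subseteq> wcls E XX b ?F0 ` topspace (ST ?F0)" using tb by auto
    have "{q \<in> topspace (ST ?F0). wcls E XX b ?F0 q \<in> {?c}} = ?c"
    proof
      show "{q \<in> topspace (ST ?F0). wcls E XX b ?F0 q \<in> {?c}} \<subseteq> ?c"
        using wcls_self by auto
      show "?c \<subseteq> {q \<in> topspace (ST ?F0). wcls E XX b ?F0 q \<in> {?c}}"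
        using wcls_eq wcls_sub by blast
    qed
    moreover have "openin (ST ?F0) ?c"
    proof -
      have "?c \<subseteq> Dset ?F0"
      proof
        fix q assume "q \<in> ?c"
        then have "glued E b ?F0 (t, b t t') q" by (simp add: wcls_def)
        then show "q \<in> Dset ?F0"
          unfolding glued_def Dset_def using tt(2) E_sym by blast
      qed
      then have iso: "\<And>d. d \<in> ?c \<Longrightarrow> openin (ST ?F0) {d}"
        using Dset_iso by auto
      have "?c = \<Union>{{d} | d. d \<in> ?c}" by auto
      moreover have "openin (ST ?F0) (\<Union>{{d} | d. d \<in> ?c})"
        using iso by (intro openin_Union) auto
      ultimately show ?thesis by simp
    qed
    ultimately show "openin (ST ?F0) {q \<in> topspace (ST ?F0). wcls E XX b ?F0 q \<in> {?c}}" by simp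
  qed
  have "openin PT {x \<in> topspace PT. x ?F0 \<in> {?c}}"
    using continuous_map_product_projection[of ?F0 PF "wedgeF E XX b"] F0 oc
    unfolding continuous_map_def by auto
  then have op: "openin (wedge V E XX b) ({x \<in> topspace PT. x ?F0 \<in> {?c}} \<inter> Thr)"
    unfolding wedge_eq by (rule openin_subtopology_Int)
  have "{x \<in> topspace PT. x ?F0 \<in> {?c}} \<inter> Thr = {p}"
  proof
    show "{p} \<subseteq> {x \<in> topspace PT. x ?F0 \<in> {?c}} \<inter> Thr"
      using pT pF[OF F0] by auto
    show "{x \<in> topspace PT. x ?F0 \<in> {?c}} \<inter> Thr \<subseteq> {p}"
    proof
      fix x assume x: "x \<in> {x \<in> topspace PT. x ?F0 \<in> {?c}} \<inter> Thr"
      then have xT: "x \<in> Thr" and xc: "x ?F0 = ?c" by auto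
      have "x F = p F" for F
      proof (cases "fsubtree V E F")
        case False
        then show ?thesis using xT pT by (auto simp: PiE_iff extensional_def)
      next
        case True
        then obtain G where G: "fsubtree V E G" "F \<subseteq> G" "t \<in> G" "t' \<in> G"
          using fsubtree_extend[OF True tt(2)] by blast
        have "x G = p G" using key[OF tt(2) G(1,3,4) xT xc] pF[OF G(1,3,4)] by simp
        moreover have "rho E XX b F (x G) = x F" using xT G True by blast
        moreover have "rho E XX b F (p G) = p F" using pT G True by blast
        ultimately show ?thesis by simp
      qed
      then show "x \<in> {p}" by auto
    qed
  qed
  then show ?thesis using op by simp
qed

end

context cts begin

lemma Thr_closed: "closedin PT Thr"
proof -
  let ?S = "\<lambda>(F, F'). {x \<in> topspace PT. rho E XX b F' (x F) = x F'}"
  let ?K = "insert (topspace PT) (?S ` {(F, F'). fsubtree V E F \<and> fsubtree V E F' \<and> F' \<subseteq> F})"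
  have "Thr = \<Inter>?K" by auto
  moreover have "closedin PT (\<Inter>?K)"
  proof (rule closedin_Inter)
    show "?K \<noteq> {}" by simp
    fix S assume "S \<in> ?K"
    then consider "S = topspace PT" | F F' where "fsubtree V E F" "fsubtree V E F'" "F' \<subseteq> F" "S = ?S (F, F')"
      by auto
    then show "closedin PT S"
    proof cases
      case 1 then show ?thesis using closedin_topspace by metis
    next
      case (2 F F')
      have "continuous_map PT (WF F') (\<lambda>x. rho E XX b F' (x F))"
        using continuous_map_compose[OF continuous_map_product_projection[of F PF "wedgeF E XX b"] continuous_rho[OF 2(1,2)]] 2(1)
        by (simp add: o_def)
      moreover have "continuous_map PT (WF F') (\<lambda>x. x F')"
        using continuous_map_product_projection[of F' PF "wedgeF E XX b"] 2(2) by simp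
      moreover have "Hausdorff_space (WF F')"
        using metrizable_WF[OF 2(2)] metrizable_imp_Hausdorff_space by blast
      ultimately show ?thesis using 2(4) closedin_continuous_maps_eq by fastforce
    qed
  qed
  ultimately show ?thesis by simp
qed

lemma compact_wedge: "compact_space (wedge V E XX b)"
proof -
  have "compact_space PT"
    using compact_WF by (simp add: compact_space_product_topology)
  then show ?thesis
    unfolding wedge_eq using Thr_closed closedin_compact_space compact_space_subtopology by blast
qed

lemma metrizable_wedge: "metrizable_space (wedge V E XX b)"
proof -
  have "countable V" using cts by (simp add: complete_tree_system_def infinite_valence_tree_def)
  then have "countable {A. finite A \<and> A \<subseteq> V}" by (rule countable_Collect_finite_subset)
  moreover have "PF \<subseteq> {A. finite A \<and> A \<subseteq> V}" by (auto simp: fsubtree_def)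
  ultimately have "countable PF" by (rule countable_subset[rotated])
  then have "countable {i. fsubtree V E i \<and> (\<forall>a. \<not> topspace (WF i) \<subseteq> {a})}"
    by (rule countable_subset[rotated]) auto
  then have "metrizable_space PT"
    using metrizable_WF by (simp add: metrizable_space_product_topology)
  then show ?thesis unfolding wedge_eq by (rule metrizable_space_subtopology)
qed

lemma main:
  shows "(\<forall>p \<in> wedge_points V E XX b. openin (wedge V E XX b) {p})
    \<and> openin (wedge V E XX b) (wedge_points V E XX b)
    \<and> compact_space (subtopology (wedge V E XX b) (topspace (wedge V E XX b) - wedge_points V E XX b))
    \<and> metrizable_space (subtopology (wedge V E XX b) (topspace (wedge V E XX b) - wedge_points V E XX b))"
proof (intro conjI)
  show iso: "\<forall>p \<in> wedge_points V E XX b. openin (wedge V E XX b) {p}"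
    using isolated by blast
  have "wedge_points V E XX b = \<Union>{{p} | p. p \<in> wedge_points V E XX b}" by auto
  moreover have "openin (wedge V E XX b) (\<Union>{{p} | p. p \<in> wedge_points V E XX b})"
    using iso by (intro openin_Union) auto
  ultimately show op: "openin (wedge V E XX b) (wedge_points V E XX b)" by simp
  have "closedin (wedge V E XX b) (topspace (wedge V E XX b) - wedge_points V E XX b)"
    using op by (rule closedin_diff[OF closedin_topspace])
  then show "compact_space (subtopology (wedge V E XX b) (topspace (wedge V E XX b) - wedge_points V E XX b))"
    using compact_wedge closedin_compact_space compact_space_subtopology by blast
  show "metrizable_space (subtopology (wedge V E XX b) (topspace (wedge V E XX b) - wedge_points V E XX b))"
    using metrizable_wedge by (rule metrizable_space_subtopology)
qed

end

theorem lemma1p4: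
  fixes X :: "'a topology" and XX :: "'v \<Rightarrow> 'b topology" and P :: "'v \<Rightarrow> 'b set"
    and V :: "'v set" and E :: "'v \<Rightarrow> 'v \<Rightarrow> bool" and b :: "'v \<Rightarrow> 'v \<Rightarrow> 'b"
  assumes "compact_space X" and "metrizable_space X" and "topspace X \<noteq> {}"
    and "complete_tree_system V E X XX P b"
  shows "(\<forall>p \<in> wedge_points V E XX b. openin (wedge V E XX b) {p})
    \<and> openin (wedge V E XX b) (wedge_points V E XX b)
    \<and> compact_space (subtopology (wedge V E XX b) (topspace (wedge V E XX b) - wedge_points V E XX b))
    \<and> metrizable_space (subtopology (wedge V E XX b) (topspace (wedge V E XX b) - wedge_points V E XX b))"
proof -
  interpret cts V E X XX P b using assms(4) by unfold_locales
  show ?thesis by (rule main)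
qed

end
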